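(* Let $r\ge2$, let $s_1,\dots,s_r,n$ be independent indeterminates over $\mathbb{Q}$, and let $R_1=n\,S_r(r\varphi(t)-t\varphi'(t))-S_r(\varphi(t))\,\mathrm{diag}(r-1,r-2,\ldots,1,0)$. Then \[ R_1^{-1}=\frac1n\,Q\left(\frac{r-1}{r},\frac{r-2}{r},\ldots,\frac1r,\frac0r\right)\mathrm{diag}(\zeta_1,\ldots,\zeta_r)\,P\left(-\frac{2r-1}{r},-\frac{2r-2}{r},\ldots,-\frac{r+1}{r},-\frac rr\right), \] where $\zeta_i=\frac{n}{rn-(r-i)}$ for $1\le i\le r$.
   Context: $\varphi(t)=1+s_1t+\cdots+s_rt^r$. For $\lambda\in\mathbb{C}$ and $\ell\in\mathbb{Z}$, $\beta_\ell(\lambda)$ is the coefficient of $t^\ell$ in $\varphi(t)^\lambda$ (so $\beta_0=1$, $\beta_\ell=0$ for $\ell<0$). For $\lambda_1,\dots,\lambda_m$, $P(\lambda_1,\ldots,\lambda_m)$ is the $m\times m$ matrix with $(i,j)$ entry $\beta_{i-j}(\lambda_i)$; $Q(\mu_1,\ldots,\mu_m)$ is the $m\times m$ matrix with $(i,j)$ entry $\beta_{i-j}(\mu_j)$. For a power series $\psi(t)=a_0+a_1t+\cdots$, $S_m(\psi(t))$ is the $m\times m$ matrix with $(i,j)$ entry $a_{i-j}$ ($a_i=0$ for $i<0$). *)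

theory Defs
  imports "HOL-Computational_Algebra.Formal_Power_Series" "Jordan_Normal_Form.Matrix"
begin

text \<open>phi(t) = 1 + s_1 t + ... + s_r t^r (s is indexed from 1; s 0 is ignored).\<close>
definition phi :: "(nat \<Rightarrow> 'a::comm_ring_1) \<Rightarrow> nat \<Rightarrow> 'a fps" where
  "phi s r = Abs_fps (\<lambda>k. if k = 0 then 1 else if k \<le> r then s k else 0)"

text \<open>phi(t)^lambda, defined as the binomial series (1+X)^lambda composed with phi - 1
  (phi - 1 has zero constant term).\<close>
definition phi_pow :: "(nat \<Rightarrow> 'a::field_char_0) \<Rightarrow> nat \<Rightarrow> 'a \<Rightarrow> 'a fps" where
  "phi_pow s r lam = fps_compose (fps_binomial lam) (phi s r - 1)"

text \<open>beta_l(lambda): coefficient of t^l in phi(t)^lambda (l a natural number; negative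
  indices are handled as 0 in the matrices below).\<close>
definition beta :: "(nat \<Rightarrow> 'a::field_char_0) \<Rightarrow> nat \<Rightarrow> nat \<Rightarrow> 'a \<Rightarrow> 'a" where
  "beta s r l lam = fps_nth (phi_pow s r lam) l"

text \<open>Matrices are 0-indexed: entry (i,j) here is entry (i+1,j+1) of the paper.\<close>
definition P_mat :: "(nat \<Rightarrow> 'a::field_char_0) \<Rightarrow> nat \<Rightarrow> (nat \<Rightarrow> 'a) \<Rightarrow> nat \<Rightarrow> 'a mat" where
  "P_mat s r lam m = mat m m (\<lambda>(i,j). if j \<le> i then beta s r (i - j) (lam i) else 0)"

definition Q_mat :: "(nat \<Rightarrow> 'a::field_char_0) \<Rightarrow> nat \<Rightarrow> (nat \<Rightarrow> 'a) \<Rightarrow> nat \<Rightarrow> 'a mat" where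
  "Q_mat s r mu m = mat m m (\<lambda>(i,j). if j \<le> i then beta s r (i - j) (mu j) else 0)"

definition S_mat :: "nat \<Rightarrow> 'a::comm_ring_1 fps \<Rightarrow> 'a mat" where
  "S_mat m psi = mat m m (\<lambda>(i,j). if j \<le> i then fps_nth psi (i - j) else 0)"

definition diag_m :: "nat \<Rightarrow> (nat \<Rightarrow> 'a::zero) \<Rightarrow> 'a mat" where
  "diag_m m f = mat m m (\<lambda>(i,j). if i = j then f i else 0)"

end

theory Submission
  imports Defs "Jordan_Normal_Form.Determinant"
begin
no_notation vec_index (infixl \<open>$\<close> 100)
notation fps_nth (infixl \<open>$\<close> 75)

lemma phi0: "(phi s r - 1) $ 0 = 0"
  by (simp add: phi_def)

lemma pp_add: "phi_pow s r (a + b) = phi_pow s r a * phi_pow s r b"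
  unfolding phi_pow_def by (simp add: fps_binomial_add_mult fps_compose_mult_distrib[OF phi0])

lemma pp_1: "phi_pow s r 1 = phi s r"
  unfolding phi_pow_def by (simp add: fps_binomial_1 fps_compose_add_distrib fps_X_fps_compose_startby0[OF phi0])

lemma pp_0: "phi_pow s r 0 = 1"
  unfolding phi_pow_def by simp

lemma pp_nth0: "phi_pow s r c $ 0 = 1"
  unfolding phi_pow_def by simp

lemma binom_ode: "(1 + fps_X) * fps_deriv (fps_binomial c) = fps_const (c::'a::field_char_0) * fps_binomial c"
proof -
  have u: "(1 + fps_X :: 'a fps) $ 0 \<noteq> 0" by simp
  show ?thesis unfolding fps_binomial_deriv
    using fps_divide_unit[OF u] inverse_mult_eq_1[OF u]
    by (metis (no_types, lifting) mult.commute mult.left_commute mult_1_right)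
qed

lemma pp_deriv0: "phi s r * fps_deriv (phi_pow s r c) = fps_const c * phi_pow s r c * fps_deriv (phi s r)"
proof -
  have "fps_deriv (phi_pow s r c) = (fps_deriv (fps_binomial c) oo (phi s r - 1)) * fps_deriv (phi s r)"
    unfolding phi_pow_def by (simp add: fps_compose_deriv[OF phi0])
  moreover have "phi s r * (fps_deriv (fps_binomial c) oo (phi s r - 1)) = fps_const c * phi_pow s r c"
  proof -
    have "((1 + fps_X) * fps_deriv (fps_binomial c)) oo (phi s r - 1) = (fps_const c * fps_binomial c) oo (phi s r - 1)"
      by (simp add: binom_ode)
    thus ?thesis unfolding phi_pow_def
      by (simp add: fps_compose_mult_distrib[OF phi0] fps_compose_add_distrib fps_X_fps_compose_startby0[OF phi0])
  qed
  ultimately show ?thesis by (metis mult.assoc)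
qed

lemma pp_deriv: "fps_deriv (phi_pow s r c) = fps_const c * phi_pow s r (c - 1) * fps_deriv (phi s r)"
proof -
  have "phi_pow s r (-1) * phi s r = 1"
    by (metis pp_1 pp_add pp_0 add.commute right_minus)
  hence "fps_deriv (phi_pow s r c) = phi_pow s r (-1) * (phi s r * fps_deriv (phi_pow s r c))"
    by (metis mult.assoc mult_1)
  also have "\<dots> = fps_const c * (phi_pow s r (-1) * phi_pow s r c) * fps_deriv (phi s r)"
    by (simp add: pp_deriv0 ac_simps)
  also have "phi_pow s r (-1) * phi_pow s r c = phi_pow s r (c - 1)"
    by (simp add: pp_add[symmetric])
  finally show ?thesis .
qed

lemma key_coeff: "of_nat k * phi_pow s r e $ k = e * (fps_X * phi_pow s r (e - 1) * fps_deriv (phi s r)) $ k"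
proof (cases k)
  case 0 thus ?thesis by simp
next
  case (Suc m)
  have "fps_deriv (phi_pow s r e) $ m = (fps_const e * (phi_pow s r (e - 1) * fps_deriv (phi s r))) $ m"
    by (simp add: pp_deriv mult.assoc)
  thus ?thesis using Suc by (simp add: mult.assoc)
qed

lemma main_coeff:
  fixes s :: "nat \<Rightarrow> 'a::field_char_0" and n :: 'a
  assumes ij: "i < r" "j < r" and nz: "of_nat r * n - of_nat (r-1-j) \<noteq> 0"
  assumes f_def: "f = phi s r" and pp_def: "pp = phi_pow s r"
    and mu_def: "mu = (\<lambda>j. (of_nat (r-1-j) :: 'a) / of_nat r)"
    and lam_def: "lam = - (of_nat (2*r-1-i) / (of_nat r :: 'a))"
    and H_def: "H = fps_X ^ j * pp (mu j)"
    and psi_def: "psi = fps_const (of_nat r) * f - fps_X * fps_deriv f"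
    and z_def: "z = n / (of_nat r * n - of_nat (r-1-j))"
  shows "(pp lam * (fps_const z * (fps_const n * (psi * H) - f * (fps_const (of_nat (r-1)) * H - fps_X * fps_deriv H)))) $ i = (if i = j then n else 0)"
proof -
  define e where "e = mu j - mu i"
  define A where "A = pp lam"
  define B where "B = pp (mu j)"
  define C where "C = pp (mu j - 1)"
  define f' where "f' = fps_deriv f"
  have r0: "(of_nat r :: 'a) \<noteq> 0" using ij by simp
  have lam_eq: "lam = -1 - mu i"
  proof -
    have "of_nat (2*r-1-i) = (of_nat r + of_nat (r-1-i) :: 'a)"
      using ij by (simp add: of_nat_add[symmetric])
    thus ?thesis unfolding lam_def mu_def using r0 by (simp add: field_simps)
  qed
  have A1: "A * B = pp (e - 1)" unfolding A_def B_def pp_def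
    by (simp add: pp_add[symmetric] lam_eq e_def algebra_simps)
  have A2: "pp (e - 1) * f = pp e" unfolding pp_def f_def
    by (simp add: pp_1[symmetric] pp_add[symmetric])
  have A3: "A * C * f = pp (e - 1)" unfolding A_def C_def pp_def f_def
    by (simp add: pp_1[symmetric] pp_add[symmetric] lam_eq e_def algebra_simps)
  have dH: "fps_X * fps_deriv H = fps_const (of_nat j) * H + fps_const (mu j) * fps_X ^ (j+1) * C * f'"
  proof (cases j)
    case 0 thus ?thesis unfolding H_def C_def f'_def pp_def f_def by (simp add: pp_deriv ac_simps)
  next
    case (Suc m)
    have dX: "fps_deriv (fps_X ^ j :: 'a fps) = fps_const (of_nat j) * fps_X^m"
      unfolding fps_deriv_power fps_deriv_fps_X using Suc by simp
    have XX: "fps_X * fps_X ^ m = (fps_X ^ j :: 'a fps)" using Suc by simp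
    have XX2: "fps_X * fps_X ^ j = (fps_X ^ (j+1) :: 'a fps)" by simp
    have "fps_X * fps_deriv H = fps_const (of_nat j) * (fps_X * fps_X ^ m) * pp (mu j)
       + fps_const (mu j) * (fps_X * fps_X ^ j) * C * f'"
      unfolding H_def fps_deriv_mult dX unfolding C_def f'_def pp_def f_def pp_deriv
      by (simp only: algebra_simps)
    thus ?thesis unfolding XX XX2 H_def by (simp only: algebra_simps)
  qed
  define c1 where "c1 = of_nat r * n - of_nat (r-1) + of_nat j"
  have "pp lam * (fps_const z * (fps_const n * (psi * H) - f * (fps_const (of_nat (r-1)) * H - fps_X * fps_deriv H)))
     = fps_const z * (fps_const (of_nat r) * fps_const n * fps_X^j * (A*B*f) - fps_const n * fps_X^(j+1) * f' * (A*B)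
        - fps_const (of_nat (r-1)) * fps_X^j * (A*B*f) + fps_const (of_nat j) * fps_X^j * (A*B*f)
        + fps_const (mu j) * fps_X^(j+1) * f' * (A*C*f))"
    unfolding dH unfolding psi_def H_def A_def[symmetric] B_def[symmetric] f'_def[symmetric]
    by (simp add: algebra_simps)
  also have "\<dots> = fps_const z * (fps_X^j * (fps_const c1 * pp e + fps_const (mu j - n) * (fps_X * pp (e - 1) * f')))"
  proof -
    have c1e: "fps_const c1 = fps_const (of_nat r) * fps_const n - fps_const (of_nat (r-1)) + fps_const (of_nat j)"
      by (simp add: c1_def)
    have mne: "fps_const (mu j - n) = fps_const (mu j) - fps_const n" by simp
    have XP: "fps_X^(j+1) = (fps_X * fps_X^j :: 'a fps)" by simp
    show ?thesis unfolding A3 A1 A2 c1e mne XP by (simp only: algebra_simps)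
  qed
  finally have eq: "pp lam * (fps_const z * (fps_const n * (psi * H) - f * (fps_const (of_nat (r-1)) * H - fps_X * fps_deriv H)))
     = fps_const z * (fps_X^j * (fps_const c1 * pp e + fps_const (mu j - n) * (fps_X * pp (e - 1) * f')))" .
  define F where "F = fps_const c1 * pp e + fps_const (mu j - n) * (fps_X * pp (e - 1) * f')"
  have eqi: "(pp lam * (fps_const z * (fps_const n * (psi * H) - f * (fps_const (of_nat (r-1)) * H - fps_X * fps_deriv H)))) $ i
     = (if i < j then 0 else z * F $ (i - j))"
    unfolding eq F_def[symmetric] by (simp only: fps_mult_left_const_nth fps_X_power_mult_nth) simp
  show ?thesis
  proof (cases "i < j")
    case True thus ?thesis unfolding eqi by simp
  next
    case False
    define k where "k = i - j"
    have ik: "i - j = k" by (simp add: k_def)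
    have ek: "e = of_nat k / of_nat r"
    proof -
      have "of_nat (r-1-j) = (of_nat k + of_nat (r-1-i) :: 'a)"
      proof -
        have "r-1-j = k + (r-1-i)" using ij False by (simp add: k_def)
        thus ?thesis by (metis of_nat_add)
      qed
      thus ?thesis unfolding e_def mu_def using r0 by (simp add: field_simps)
    qed
    have zc: "z * c1 = n"
    proof -
      have "c1 = of_nat r * n - of_nat (r-1-j)"
        using ij by (simp add: c1_def of_nat_diff)
      thus ?thesis using nz by (simp add: z_def)
    qed
    have Fk: "F $ k = c1 * pp e $ k + (mu j - n) * (fps_X * pp (e - 1) * f') $ k"
      unfolding F_def by (simp only: fps_add_nth fps_mult_left_const_nth)
    show ?thesis
    proof (cases "k = 0")
      case True
      hence "i = j" using False k_def by simp
      moreover have "F $ k = c1" unfolding Fk using True by (simp add: pp_def pp_nth0)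
      ultimately show ?thesis unfolding eqi using True zc by (simp add: ik)
    next
      case k0: False
      have kc: "of_nat k * pp e $ k = e * (fps_X * pp (e - 1) * f') $ k"
        unfolding pp_def f'_def f_def by (rule key_coeff)
      define g where "g = (fps_X * pp (e - 1) * f') $ k"
      define p where "p = pp e $ k"
      have "of_nat k * p = of_nat k / of_nat r * g" using kc unfolding ek g_def p_def .
      hence G: "g = of_nat r * p"
        using k0 r0 by (simp add: field_simps)
      have c0: "c1 + (mu j - n) * of_nat r = 0"
        using ij r0 by (simp add: c1_def mu_def of_nat_diff field_simps)
      have "F $ k = (c1 + (mu j - n) * of_nat r) * p"
        unfolding Fk g_def[symmetric] p_def[symmetric] G by (simp add: algebra_simps)
      hence "F $ k = 0" using c0 by simp
      thus ?thesis unfolding eqi using False k0 ik by simp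
    qed
  qed
qed

definition colm :: "nat \<Rightarrow> nat \<Rightarrow> (nat \<Rightarrow> 'a::comm_ring_1 fps) \<Rightarrow> 'a mat" where
  "colm m c G = mat m c (\<lambda>(b,j). G j $ b)"

definition toep :: "nat \<Rightarrow> (nat \<Rightarrow> 'a::comm_ring_1 fps) \<Rightarrow> 'a mat" where
  "toep m F = mat m m (\<lambda>(i,j). if j \<le> i then F i $ (i - j) else 0)"

lemma colm_carrier[simp]: "colm m c G \<in> carrier_mat m c"
  by (simp add: colm_def)
lemma colm_dims[simp]: "dim_row (colm m c G) = m" "dim_col (colm m c G) = c"
  by (simp_all add: colm_def)
lemma colm_index[simp]: "i < m \<Longrightarrow> j < c \<Longrightarrow> colm m c G $$ (i,j) = G j $ i"
  by (simp add: colm_def)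
lemma toep_carrier[simp]: "toep m F \<in> carrier_mat m m"
  by (simp add: toep_def)

lemma conv_sum:
  fixes f g :: "'a::comm_ring_1 fps"
  assumes "i < m"
  shows "(\<Sum>b\<in>{0..<m}. (if b \<le> i then f $ (i - b) else 0) * g $ b) = (f * g) $ i"
proof -
  have "(\<Sum>b\<in>{0..<m}. (if b \<le> i then f $ (i - b) else 0) * g $ b)
      = (\<Sum>b\<in>{0..<m}. if b \<le> i then f $ (i - b) * g $ b else 0)"
    by (rule sum.cong) auto
  also have "\<dots> = (\<Sum>b\<in>{0..<m} \<inter> {b. b \<le> i}. f $ (i - b) * g $ b)"
    by (simp add: sum.inter_restrict)
  also have "{0..<m} \<inter> {b. b \<le> i} = {0..i}" using assms by auto
  also have "(\<Sum>b\<in>{0..i}. f $ (i - b) * g $ b) = (g * f) $ i"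
    by (unfold fps_mult_nth) (simp add: ac_simps)
  finally show ?thesis by (simp add: mult.commute)
qed

lemma toep_colm: "toep m F * colm m c G = mat m c (\<lambda>(i,j). (F i * G j) $ i)"
proof (rule eq_matI)
  fix i j assume ij: "i < dim_row (mat m c (\<lambda>(i,j). (F i * G j) $ i))" "j < dim_col (mat m c (\<lambda>(i,j). (F i * G j) $ i))"
  hence ij: "i < m" "j < c" by auto
  have "(toep m F * colm m c G) $$ (i,j) = (\<Sum>b\<in>{0..<m}. (if b \<le> i then F i $ (i - b) else 0) * G j $ b)"
    using ij by (simp add: scalar_prod_def toep_def)
  also have "\<dots> = (F i * G j) $ i" by (rule conv_sum[OF ij(1)])
  finally show "(toep m F * colm m c G) $$ (i,j) = mat m c (\<lambda>(i,j). (F i * G j) $ i) $$ (i,j)"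
    using ij by simp
qed (auto simp: toep_def)

lemma S_toep: "S_mat m f = toep m (\<lambda>_. f)"
  by (simp add: S_mat_def toep_def)
lemma P_toep: "P_mat s r lam m = toep m (\<lambda>i. phi_pow s r (lam i))"
  unfolding P_mat_def toep_def beta_def ..
lemma Q_colm: "Q_mat s r mu m = colm m m (\<lambda>j. fps_X ^ j * phi_pow s r (mu j))"
  by (rule eq_matI) (auto simp: Q_mat_def colm_def beta_def fps_X_power_mult_nth)

lemma S_colm: "S_mat m f * colm m c G = colm m c (\<lambda>j. f * G j)"
  unfolding S_toep toep_colm by (simp add: colm_def)

lemma diag_colm:
  "diag_m m (\<lambda>i. of_nat (m - 1 - i)) * colm m c G
     = colm m c (\<lambda>j. fps_const (of_nat (m - 1)) * G j - fps_X * fps_deriv (G j))"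
proof (rule eq_matI)
  fix i j assume "i < dim_row (colm m c (\<lambda>j. fps_const (of_nat (m - 1)) * G j - fps_X * fps_deriv (G j)))"
    "j < dim_col (colm m c (\<lambda>j. fps_const (of_nat (m - 1)) * G j - fps_X * fps_deriv (G j)))"
  hence ij: "i < m" "j < c" by auto
  have "(diag_m m (\<lambda>i. of_nat (m - 1 - i)) * colm m c G) $$ (i,j)
      = (\<Sum>b\<in>{0..<m}. if i = b then of_nat (m - 1 - i) * G j $ b else 0)"
    using ij by (simp add: scalar_prod_def diag_m_def mult_delta_left mult_delta_right)
  also have "\<dots> = of_nat (m - 1 - i) * G j $ i"
    using ij by simp
  also have "\<dots> = (fps_const (of_nat (m - 1)) * G j - fps_X * fps_deriv (G j)) $ i"
    using ij by (cases i) (auto simp: of_nat_diff algebra_simps)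
  finally show "(diag_m m (\<lambda>i. of_nat (m - 1 - i)) * colm m c G) $$ (i,j)
     = colm m c (\<lambda>j. fps_const (of_nat (m - 1)) * G j - fps_X * fps_deriv (G j)) $$ (i,j)"
    using ij by simp
qed (auto simp: diag_m_def)

lemma colm_diag: "colm m c G * diag_m c z = colm m c (\<lambda>j. fps_const (z j) * G j)"
proof (rule eq_matI)
  fix i j assume "i < dim_row (colm m c (\<lambda>j. fps_const (z j) * G j))" "j < dim_col (colm m c (\<lambda>j. fps_const (z j) * G j))"
  hence ij: "i < m" "j < c" by auto
  have "(colm m c G * diag_m c z) $$ (i,j) = (\<Sum>b\<in>{0..<c}. if j = b then G j $ i * z j else 0)"
    using ij by (simp add: scalar_prod_def diag_m_def mult_delta_left mult_delta_right)
  also have "\<dots> = G j $ i * z j"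
    using ij by simp
  finally show "(colm m c G * diag_m c z) $$ (i,j) = colm m c (\<lambda>j. fps_const (z j) * G j) $$ (i,j)"
    using ij by (simp add: mult.commute)
qed (auto simp: diag_m_def)

lemma colm_smult: "a \<cdot>\<^sub>m colm m c G = colm m c (\<lambda>j. fps_const a * G j)"
  by (rule eq_matI) auto
lemma colm_minus: "colm m c G - colm m c H = colm m c (\<lambda>j. G j - H j)"
  by (rule eq_matI) auto


theorem lemma13:
  fixes s :: "nat \<Rightarrow> 'a::field_char_0" and n :: 'a and r :: nat
  assumes "r \<ge> 2"
    and "n \<noteq> 0"
    and "\<And>k. k < r \<Longrightarrow> of_nat r * n - of_nat k \<noteq> 0"
  defines "R1 \<equiv> n \<cdot>\<^sub>m S_mat r (fps_const (of_nat r) * phi s r - fps_X * fps_deriv (phi s r))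
                 - S_mat r (phi s r) * diag_m r (\<lambda>i. of_nat (r - 1 - i))"
    and "M \<equiv> (1 / n) \<cdot>\<^sub>m
            (Q_mat s r (\<lambda>j. of_nat (r - 1 - j) / of_nat r) r
             * diag_m r (\<lambda>i. n / (of_nat r * n - of_nat (r - 1 - i)))
             * P_mat s r (\<lambda>i. - (of_nat (2 * r - 1 - i) / of_nat r)) r)"
  shows "inverts_mat R1 M \<and> inverts_mat M R1"
proof -
  define f where "f = phi s r"
  define pp where "pp = phi_pow s r"
  define mu where "mu = (\<lambda>j. (of_nat (r-1-j) :: 'a) / of_nat r)"
  define lam where "lam = (\<lambda>i. - (of_nat (2*r-1-i) / (of_nat r :: 'a)))"
  define H where "H = (\<lambda>j. fps_X ^ j * pp (mu j))"
  define psi where "psi = fps_const (of_nat r) * f - fps_X * fps_deriv f"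
  define z where "z = (\<lambda>j. n / (of_nat r * n - of_nat (r-1-j)))"
  define Q where "Q = Q_mat s r (\<lambda>j. of_nat (r - 1 - j) / of_nat r) r"
  define Z where "Z = diag_m r (\<lambda>i. n / (of_nat r * n - of_nat (r - 1 - i)))"
  define P where "P = P_mat s r (\<lambda>i. - (of_nat (2 * r - 1 - i) / of_nat r)) r"
  define D where "D = diag_m r (\<lambda>i. (of_nat (r - 1 - i) :: 'a))"
  have Qc: "Q = colm r r H" unfolding Q_def H_def pp_def mu_def by (rule Q_colm)
  have Pt: "P = toep r (\<lambda>i. pp (lam i))" unfolding P_def pp_def lam_def by (rule P_toep)
  have Zz: "Z = diag_m r z" unfolding Z_def z_def ..
  have cS: "\<And>g. S_mat r g \<in> carrier_mat r r" by (simp add: S_toep)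
  have cD: "D \<in> carrier_mat r r" by (simp add: D_def diag_m_def)
  have cZ: "Z \<in> carrier_mat r r" by (simp add: Z_def diag_m_def)
  have cP: "P \<in> carrier_mat r r" by (simp add: Pt)
  have cQ: "Q \<in> carrier_mat r r" by (simp add: Qc)
  have R1e: "R1 = n \<cdot>\<^sub>m S_mat r psi - S_mat r f * D"
    unfolding R1_def psi_def f_def D_def ..
  have cR: "R1 \<in> carrier_mat r r" unfolding R1e by (rule minus_carrier_mat, rule mult_carrier_mat[OF cS cD])
  have RQ: "R1 * Q = colm r r (\<lambda>j. fps_const n * (psi * H j) - f * (fps_const (of_nat (r-1)) * H j - fps_X * fps_deriv (H j)))"
  proof -
    have "R1 * Q = (n \<cdot>\<^sub>m S_mat r psi) * Q - (S_mat r f * D) * Q"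
      unfolding R1e by (rule minus_mult_distrib_mat[where nr=r and n=r and nc=r]) (use smult_carrier_mat[OF cS] mult_carrier_mat[OF cS cD] cQ in auto)
    also have "(n \<cdot>\<^sub>m S_mat r psi) * Q = n \<cdot>\<^sub>m (S_mat r psi * Q)"
      by (rule mult_smult_assoc_mat[OF cS cQ])
    also have "(S_mat r f * D) * Q = S_mat r f * (D * Q)"
      by (rule assoc_mult_mat[OF cS cD cQ])
    also have "D * Q = colm r r (\<lambda>j. fps_const (of_nat (r - 1)) * H j - fps_X * fps_deriv (H j))"
      unfolding D_def Qc by (rule diag_colm)
    finally show ?thesis unfolding Qc S_colm colm_smult colm_minus .
  qed
  have PN: "P * (R1 * Q * Z) = n \<cdot>\<^sub>m 1\<^sub>m r"
  proof -
    have "P * (R1 * Q * Z) = mat r r (\<lambda>(i,j). (pp (lam i) * (fps_const (z j) * (fps_const n * (psi * H j) - f * (fps_const (of_nat (r-1)) * H j - fps_X * fps_deriv (H j))))) $ i)"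
      unfolding RQ Zz colm_diag Pt toep_colm ..
    also have "\<dots> = n \<cdot>\<^sub>m 1\<^sub>m r"
    proof (rule eq_matI)
      fix i j assume "i < dim_row (n \<cdot>\<^sub>m 1\<^sub>m r)" "j < dim_col (n \<cdot>\<^sub>m (1\<^sub>m r :: 'a mat))"
      hence ij: "i < r" "j < r" by auto
      have nz: "of_nat r * n - of_nat (r-1-j) \<noteq> 0" using assms(3)[of "r-1-j"] ij by linarith
      have "(pp (lam i) * (fps_const (z j) * (fps_const n * (psi * H j) - f * (fps_const (of_nat (r-1)) * H j - fps_X * fps_deriv (H j))))) $ i
          = (if i = j then n else 0)"
        by (rule main_coeff[OF ij nz f_def pp_def mu_def]) (simp_all add: lam_def H_def psi_def z_def)
      thus "mat r r (\<lambda>(i,j). (pp (lam i) * (fps_const (z j) * (fps_const n * (psi * H j) - f * (fps_const (of_nat (r-1)) * H j - fps_X * fps_deriv (H j))))) $ i) $$ (i,j)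
          = (n \<cdot>\<^sub>m 1\<^sub>m r) $$ (i,j)" using ij by simp
    qed auto
    finally show ?thesis .
  qed
  define N where "N = (1/n) \<cdot>\<^sub>m (R1 * Q * Z)"
  have cN: "N \<in> carrier_mat r r" unfolding N_def using cR cQ cZ by auto
  have "P * N = (1/n) \<cdot>\<^sub>m (n \<cdot>\<^sub>m 1\<^sub>m r)"
    unfolding N_def mult_smult_distrib[OF cP mult_carrier_mat[OF mult_carrier_mat[OF cR cQ] cZ]] PN ..
  also have "\<dots> = 1\<^sub>m r" by (rule eq_matI) (use assms(2) in auto)
  finally have "P * N = 1\<^sub>m r" .
  hence NP: "N * P = 1\<^sub>m r" by (rule mat_mult_left_right_inverse[OF cP cN])
  have Me: "M = (1/n) \<cdot>\<^sub>m (Q * Z * P)" unfolding M_def Q_def Z_def P_def ..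
  have cM: "M \<in> carrier_mat r r" unfolding Me using cQ cZ cP by auto
  have "R1 * M = N * P"
  proof -
    have "R1 * M = (1/n) \<cdot>\<^sub>m (R1 * (Q * Z * P))"
      unfolding Me by (rule mult_smult_distrib[OF cR]) (use cQ cZ cP in auto)
    also have "R1 * (Q * Z * P) = R1 * Q * Z * P"
      using cR cQ cZ cP by (simp add: assoc_mult_mat[of _ r r _ r _ r])
    also have "(1/n) \<cdot>\<^sub>m (R1 * Q * Z * P) = N * P"
      unfolding N_def by (rule mult_smult_assoc_mat[symmetric]) (use cR cQ cZ cP in auto)
    finally show ?thesis .
  qed
  hence RM: "R1 * M = 1\<^sub>m r" using NP by simp
  have MR: "M * R1 = 1\<^sub>m r" by (rule mat_mult_left_right_inverse[OF cR cM RM])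
  show ?thesis unfolding inverts_mat_def using RM MR cR cM by auto
qed

end
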